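(* Let $S\subset\mathrm{Hom}(\Lambda_H\otimes\mathbb{R},\mathbb{C})$ be the set of central charges \[ Z^{a,b}_{\alpha,\beta} = \left[-e^\beta_3 + b\,e^\beta_2 + a\,e^\beta_1\right] + i\left[e^\beta_2 - \tfrac12\alpha^2 e_0\right] \] for all $\alpha,\beta,a,b\in\mathbb{R}$ with $\alpha>0$ and $a>\frac16\alpha^2+\frac12|b|\alpha$. Then $S\subset\mathfrak{P}$, $S$ is a slice of $\mathfrak{P}$ for the action of $\mathrm{GL}_2^+(\mathbb{R})$ (every $\mathrm{GL}_2^+(\mathbb{R})$-orbit in $\mathfrak{P}$ meets $S$ in exactly one point), and $S$ is simply connected.
   Context: Coordinates $(e_0,e_1,e_2,e_3)$ on $\Lambda_H\otimes\mathbb{R}=\mathbb{R}^4$ (corresponding to $(H^3\mathrm{ch}_0,H^2\mathrm{ch}_1,H\mathrm{ch}_2,\mathrm{ch}_3)$). For $\beta\in\mathbb{R}$ set $e^\beta_1 = e_1-\beta e_0$, $e^\beta_2 = e_2-\beta e_1+\frac{\beta^2}{2}e_0$, $e^\beta_3 = e_3-\beta e_2+\frac{\beta^2}{2}e_1-\frac{\beta^3}{6}e_0$. Let $\mathfrak{C}=\{(x^3,x^2y,\frac12xy^2,\frac16y^3):x,y\in\mathbb{R}\}$, $\mathfrak{V}$ the open set of $\mathbb{R}$-linear $Z\colon\mathbb{R}^4\to\mathbb{C}$ with $\ker Z\cap\mathfrak{C}=\{0\}$, and $\mathfrak{P}$ the connected component of $\mathfrak{V}$ containing $Z^{\mathrm{basic}}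 = (-e_3+\frac12e_1)+i(e_2-\frac16e_0)$. $\mathrm{GL}_2^+(\mathbb{R})$ acts on $\mathfrak{P}$ by post-composition with the induced $\mathbb{R}$-linear map of $\mathbb{R}^2\cong\mathbb{C}$. *)

theory Defs
  imports "HOL-Analysis.Analysis"
begin

text \<open>Lambda_H tensor R = real^4, with coordinates e_0 = v$0, ..., e_3 = v$3.
  Central charges Hom(R^4, C) are the (automatically bounded) linear maps real^4 =>L complex,
  with the operator-norm topology (= the usual topology of this 8-dim real space).\<close>

type_synonym charge = "(real^4) \<Rightarrow>\<^sub>L complex"

definition eb1 :: "real \<Rightarrow> real^4 \<Rightarrow> real" where
  "eb1 \<beta> v = v$1 - \<beta> * v$0"
definition eb2 :: "real \<Rightarrow> real^4 \<Rightarrow> real" where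
  "eb2 \<beta> v = v$2 - \<beta> * v$1 + \<beta>^2/2 * v$0"
definition eb3 :: "real \<Rightarrow> real^4 \<Rightarrow> real" where
  "eb3 \<beta> v = v$3 - \<beta> * v$2 + \<beta>^2/2 * v$1 - \<beta>^3/6 * v$0"

definition twisted_cubic :: "(real^4) set" where
  "twisted_cubic = {v. \<exists>x y::real. v$0 = x^3 \<and> v$1 = x^2*y \<and> v$2 = x*y^2/2 \<and> v$3 = y^3/6}"

definition VV :: "charge set" where
  "VV = {Z. \<forall>v\<in>twisted_cubic. blinfun_apply Z v = 0 \<longrightarrow> v = 0}"

definition Z_basic :: charge where
  "Z_basic = Blinfun (\<lambda>v. Complex (- v$3 + v$1/2) (v$2 - v$0/6))"

definition PP :: "charge set" where
  "PP = connected_component_set VV Z_basic"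

text \<open>GL_2^+(R) as 2x2 real matrices of positive determinant, acting on C = R^2
  (first coordinate Re, second Im).\<close>
definition gl2_act :: "real^2^2 \<Rightarrow> complex \<Rightarrow> complex" where
  "gl2_act g w = Complex (g$1$1 * Re w + g$1$2 * Im w) (g$2$1 * Re w + g$2$2 * Im w)"

definition in_GL2_orbit :: "charge \<Rightarrow> charge \<Rightarrow> bool" where
  "in_GL2_orbit W Z \<longleftrightarrow> (\<exists>g::real^2^2. det g > 0 \<and> (\<forall>v. blinfun_apply W v = gl2_act g (blinfun_apply Z v)))"

definition SS :: "charge set" where
  "SS = {Z. \<exists>\<alpha> \<beta> a b::real. \<alpha> > 0 \<and> a > \<alpha>^2/6 + \<bar>b\<bar>*\<alpha>/2 \<and>
     (\<forall>v. blinfun_apply Z v =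
        Complex (- eb3 \<beta> v + b * eb2 \<beta> v + a * eb1 \<beta> v) (eb2 \<beta> v - \<alpha>^2/2 * v$0))}"

end

theory Submission
  imports Defs
begin



lemma four_zero[simp]: "(4::4) = 0" by simp

lemma apply_decomp:
  fixes Z :: charge
  shows "blinfun_apply Z v = v$0 *\<^sub>R Z (axis 0 1) + v$1 *\<^sub>R Z (axis 1 1) + v$2 *\<^sub>R Z (axis 2 1) + v$3 *\<^sub>R Z (axis 3 1)"
proof -
  have "v = (\<Sum>i\<in>UNIV. v$i *\<^sub>R axis i 1)"
    using basis_expansion[of v] by (simp add: scalar_mult_eq_scaleR)
  hence "blinfun_apply Z v = (\<Sum>i\<in>UNIV. v$i *\<^sub>R Z (axis i 1))"
    by (metis (no_types, lifting) blinfun.scaleR_right blinfun.sum_right sum.cong)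
  also have "\<dots> = v$1 *\<^sub>R Z (axis 1 1) + v$2 *\<^sub>R Z (axis 2 1) + v$3 *\<^sub>R Z (axis 3 1) + v$4 *\<^sub>R Z (axis 4 1)"
    unfolding UNIV_4 by (simp add: ac_simps)
  finally show ?thesis by (simp add: ac_simps)
qed

definition slc :: "real \<Rightarrow> real \<Rightarrow> real \<Rightarrow> real \<Rightarrow> charge" where
 "slc \<alpha> \<beta> a b = Blinfun (\<lambda>v. Complex (- eb3 \<beta> v + b * eb2 \<beta> v + a * eb1 \<beta> v) (eb2 \<beta> v - \<alpha>^2/2 * v$0))"

lemma slc_apply: "blinfun_apply (slc \<alpha> \<beta> a b) v = Complex (- eb3 \<beta> v + b * eb2 \<beta> v + a * eb1 \<beta> v) (eb2 \<beta> v - \<alpha>^2/2 * v$0)"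
proof -
  have "linear (\<lambda>v::real^4. Complex (- eb3 \<beta> v + b * eb2 \<beta> v + a * eb1 \<beta> v) (eb2 \<beta> v - \<alpha>^2/2 * v$0))"
    by (rule linearI) (simp_all add: complex_eq_iff eb1_def eb2_def eb3_def field_simps)
  thus ?thesis unfolding slc_def by (simp add: linear_conv_bounded_linear bounded_linear_Blinfun_apply)
qed

lemma SS_eq: "SS = {slc \<alpha> \<beta> a b |\<alpha> \<beta> a b. \<alpha> > 0 \<and> a > \<alpha>^2/6 + \<bar>b\<bar>*\<alpha>/2}"
proof (intro set_eqI iffI)
  fix Z assume "Z \<in> SS"
  then obtain \<alpha> \<beta> a b where h: "\<alpha> > 0" "a > \<alpha>^2/6 + \<bar>b\<bar>*\<alpha>/2"
    "\<forall>v. blinfun_apply Z v = Complex (- eb3 \<beta> v + b * eb2 \<beta> v + a * eb1 \<beta> v) (eb2 \<beta> v - \<alpha>^2/2 * v$0)"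
    unfolding SS_def by blast
  hence "Z = slc \<alpha> \<beta> a b" by (intro blinfun_eqI) (simp add: slc_apply)
  thus "Z \<in> {slc \<alpha> \<beta> a b |\<alpha> \<beta> a b. \<alpha> > 0 \<and> a > \<alpha>^2/6 + \<bar>b\<bar>*\<alpha>/2}" using h by blast
next
  fix Z assume "Z \<in> {slc \<alpha> \<beta> a b |\<alpha> \<beta> a b. \<alpha> > 0 \<and> a > \<alpha>^2/6 + \<bar>b\<bar>*\<alpha>/2}"
  then obtain \<alpha> \<beta> a b where "Z = slc \<alpha> \<beta> a b" "\<alpha> > 0" "a > \<alpha>^2/6 + \<bar>b\<bar>*\<alpha>/2" by blast
  thus "Z \<in> SS" unfolding SS_def by (auto simp: slc_apply)
qed

lemma Zb: "Z_basic = slc (sqrt (1/3)) 0 (1/2) 0"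
proof -
  have "linear (\<lambda>v::real^4. Complex (- v$3 + v$1/2) (v$2 - v$0/6))"
    by (rule linearI) (simp_all add: complex_eq_iff algebra_simps)
  thus ?thesis unfolding Z_basic_def
    by (intro blinfun_eqI) (simp add: linear_conv_bounded_linear bounded_linear_Blinfun_apply slc_apply eb1_def eb2_def eb3_def)
qed

lemma Zb_SS: "Z_basic \<in> SS"
  unfolding SS_eq Zb by (intro CollectI exI[of _ "sqrt (1/3)"] exI[of _ 0] exI[of _ "1/2"] exI[of _ "0"]) auto



lemma cubic_pt: "v \<in> twisted_cubic \<Longrightarrow> \<exists>x y. v$0 = x^3 \<and> v$1 = x^2* y \<and> v$2 = x* y^2/2 \<and> v$3 = y^3/6"
  unfolding twisted_cubic_def by blast

lemma vec4_eqI: "(v::real^4)$0 = w$0 \<Longrightarrow> v$1 = w$1 \<Longrightarrow> v$2 = w$2 \<Longrightarrow> v$3 = w$3 \<Longrightarrow> v = w"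
  unfolding vec_eq_iff forall_4 by simp

lemma slc_VV:
  assumes al: "\<alpha> > 0" and ac: "a > \<alpha>^2/6 + \<bar>b\<bar>* \<alpha>/2"
  shows "slc \<alpha> \<beta> a b \<in> VV"
  unfolding VV_def
proof (intro CollectI ballI impI)
  fix v assume "v \<in> twisted_cubic" and z: "blinfun_apply (slc \<alpha> \<beta> a b) v = 0"
  then obtain x y where v: "v$0 = x^3" "v$1 = x^2* y" "v$2 = x* y^2/2" "v$3 = y^3/6"
    using cubic_pt by blast
  define sv where "sv = y - \<beta>* x"
  have e1: "eb1 \<beta> v = x^2* sv" unfolding eb1_def v sv_def by (simp add: power2_eq_square power3_eq_cube algebra_simps)
  have e2: "eb2 \<beta> v = x* sv^2/2" unfolding eb2_def v sv_def by (simp add: power2_eq_square power3_eq_cube field_simps)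
  have e3: "eb3 \<beta> v = sv^3/6" unfolding eb3_def v sv_def by (simp add: power2_eq_square power3_eq_cube field_simps)
  have r0: "Re (blinfun_apply (slc \<alpha> \<beta> a b) v) = 0" "Im (blinfun_apply (slc \<alpha> \<beta> a b) v) = 0" using z by simp_all
  have re: "b * (x * sv^2/2) + a * (x^2 * sv) - sv^3/6 = 0" using r0(1) unfolding slc_apply e1 e2 e3 by simp
  have im: "x * sv^2/2 - \<alpha>^2/2 * x^3 = 0" using r0(2) unfolding slc_apply e2 v by simp
  have hb: "b * \<alpha> \<le> \<bar>b\<bar> * \<alpha>" "-(b * \<alpha>) \<le> \<bar>b\<bar> * \<alpha>" using al
    by (auto intro: mult_right_mono) (metis abs_ge_minus_self minus_mult_left mult_right_mono less_imp_le)
  have x0: "x = 0"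
  proof (rule ccontr)
    assume xn: "x \<noteq> 0"
    from im have "x * (sv^2 - (\<alpha>* x)^2) = 0" by (simp add: power2_eq_square power3_eq_cube algebra_simps)
    with xn have "(sv - \<alpha>* x)*(sv + \<alpha>* x) = 0" by (simp add: power2_eq_square algebra_simps)
    hence "sv - \<alpha> * x = 0 \<or> sv + \<alpha> * x = 0" by simp
    hence "sv = \<alpha> * x \<or> sv = -(\<alpha> * x)" by (auto simp: algebra_simps)
    thus False
    proof
      assume sv: "sv = \<alpha>* x"
      have "x^3 * (\<alpha>*(a - \<alpha>^2/6 + b* \<alpha>/2)) = 0" using re unfolding sv
        by (simp add: power2_eq_square power3_eq_cube field_simps)
      moreover have "\<alpha>*(a - \<alpha>^2/6 + b* \<alpha>/2) > 0"
        using al ac hb by (intro mult_pos_pos; linarith)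
      ultimately show False using xn by (metis less_numeral_extra(3) mult_eq_0_iff power_not_zero)
    next
      assume sv: "sv = -(\<alpha>* x)"
      have "x^3 * (\<alpha>*(a - \<alpha>^2/6 - b* \<alpha>/2)) = 0" using re unfolding sv
        by (simp add: power2_eq_square power3_eq_cube field_simps)
      moreover have "\<alpha>*(a - \<alpha>^2/6 - b* \<alpha>/2) > 0"
        using al ac hb by (intro mult_pos_pos; linarith)
      ultimately show False using xn by (metis less_numeral_extra(3) mult_eq_0_iff power_not_zero)
    qed
  qed
  with re have "sv = 0" by simp
  with x0 have "y = 0" unfolding sv_def by simp
  with x0 show "v = 0" by (intro vec4_eqI) (simp_all add: v)
qed

lemma SS_VV: "SS \<subseteq> VV" unfolding SS_eq using slc_VV by blast



definition Lin :: "real^4 \<Rightarrow> real^4 \<Rightarrow> charge" where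
 "Lin r k = Blinfun (\<lambda>v. Complex (r$0 * v$0 + r$1 * v$1 + r$2 * v$2 + r$3 * v$3) (k$0 * v$0 + k$1 * v$1 + k$2 * v$2 + k$3 * v$3))"

lemma Lin_apply: "blinfun_apply (Lin r k) v = Complex (r$0 * v$0 + r$1 * v$1 + r$2 * v$2 + r$3 * v$3) (k$0 * v$0 + k$1 * v$1 + k$2 * v$2 + k$3 * v$3)"
proof -
  have "linear (\<lambda>v::real^4. Complex (r$0 * v$0 + r$1 * v$1 + r$2 * v$2 + r$3 * v$3) (k$0 * v$0 + k$1 * v$1 + k$2 * v$2 + k$3 * v$3))"
    by (rule linearI) (simp_all add: complex_eq_iff algebra_simps)
  thus ?thesis unfolding Lin_def by (simp add: linear_conv_bounded_linear bounded_linear_Blinfun_apply)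
qed

lemma Lin_cont_UNIV: "continuous_on UNIV (\<lambda>p::(real^4) \<times> (real^4). Lin (fst p) (snd p))"
proof -
  have "linear (\<lambda>p::(real^4) \<times> (real^4). Lin (fst p) (snd p))"
    by (rule linearI) (auto intro!: blinfun_eqI simp: Lin_apply plus_blinfun.rep_eq scaleR_blinfun.rep_eq complex_eq_iff algebra_simps)
  thus ?thesis by (simp add: linear_continuous_on linear_conv_bounded_linear)
qed

lemma Lin_cont: "continuous_on S f \<Longrightarrow> continuous_on S g \<Longrightarrow> continuous_on S (\<lambda>x. Lin (f x) (g x))"
  using continuous_on_compose2[OF Lin_cont_UNIV continuous_on_Pair, of S f g] by simp

definition vec4 :: "real \<Rightarrow> real \<Rightarrow> real \<Rightarrow> real \<Rightarrow> real^4" where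
  "vec4 w0 w1 w2 w3 = w0 *\<^sub>R axis 0 1 + w1 *\<^sub>R axis 1 1 + w2 *\<^sub>R axis 2 1 + w3 *\<^sub>R axis 3 1"

lemma vec4_nth[simp]: "vec4 w0 w1 w2 w3 $ 0 = w0" "vec4 w0 w1 w2 w3 $ 1 = w1"
  "vec4 w0 w1 w2 w3 $ 2 = w2" "vec4 w0 w1 w2 w3 $ 3 = w3"
  by (simp_all add: vec4_def axis_def)

lemma vec4_cont[continuous_intros]: "continuous_on S f0 \<Longrightarrow> continuous_on S f1 \<Longrightarrow> continuous_on S f2 \<Longrightarrow> continuous_on S f3 \<Longrightarrow>
  continuous_on S (\<lambda>x. vec4 (f0 x) (f1 x) (f2 x) (f3 x))"
  unfolding vec4_def by (intro continuous_intros)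

lemma slc_Lin: "slc \<alpha> \<beta> a b = Lin (vec4 (\<beta>^3/6 + b * \<beta>^2/2 - a * \<beta>) (a - b * \<beta> - \<beta>^2/2) (\<beta> + b) (-1))
   (vec4 (\<beta>^2/2 - \<alpha>^2/2) (-\<beta>) 1 0)"
  by (intro blinfun_eqI) (simp add: slc_apply Lin_apply eb1_def eb2_def eb3_def complex_eq_iff field_simps)

definition PPar :: "(real \<times> real \<times> real \<times> real) set" where
  "PPar = {p. fst p > 0 \<and> fst (snd (snd p)) > (fst p)^2/6 + \<bar>snd (snd (snd p))\<bar>/2}"

definition Phi :: "real \<times> real \<times> real \<times> real \<Rightarrow> charge" where
  "Phi p = slc (fst p) (fst (snd p)) (fst (snd (snd p))) (snd (snd (snd p)) / fst p)"

definition Psi :: "charge \<Rightarrow> real \<times> real \<times> real \<times> real" where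
  "Psi W = (let k0 = Im (W (axis 0 1)); k1 = Im (W (axis 1 1)); r1 = Re (W (axis 1 1)); r2 = Re (W (axis 2 1));
     \<alpha> = sqrt (k1^2 - 2*k0); \<beta> = -k1; b = r2 + k1 in (\<alpha>, \<beta>, r1 + \<beta>^2/2 + b * \<beta>, b * \<alpha>))"

lemma apply_cont: "continuous_on S (\<lambda>W::charge. blinfun_apply W x)"
  using blinfun.continuous_on[OF continuous_on_id continuous_on_const, of S x] by simp

lemma Psi_cont: "continuous_on S Psi"
proof -
  have cR: "continuous_on S (\<lambda>W::charge. Re (blinfun_apply W (axis j 1)))" for j
    by (rule continuous_on_Re[OF apply_cont])
  have cI: "continuous_on S (\<lambda>W::charge. Im (blinfun_apply W (axis j 1)))" for j
    by (rule continuous_on_Im[OF apply_cont])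
  show ?thesis unfolding Psi_def Let_def
    by (intro continuous_on_Pair continuous_on_add continuous_on_mult continuous_on_minus continuous_on_diff
        continuous_on_divide continuous_on_power continuous_on_const cR cI continuous_on_compose2[OF continuous_on_real_sqrt]) auto
qed

lemma Phi_cont: "continuous_on PPar Phi"
  unfolding Phi_def slc_Lin
  by (intro Lin_cont continuous_intros) (auto simp: PPar_def)

lemma slc_ax:
  "blinfun_apply (slc \<alpha> \<beta> a b) (axis 0 1) = Complex (\<beta>^3/6 + b*\<beta>^2/2 - a*\<beta>) (\<beta>^2/2 - \<alpha>^2/2)"
  "blinfun_apply (slc \<alpha> \<beta> a b) (axis 1 1) = Complex (a - b*\<beta> - \<beta>^2/2) (-\<beta>)"
  "blinfun_apply (slc \<alpha> \<beta> a b) (axis 2 1) = Complex (\<beta> + b) 1"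
  "blinfun_apply (slc \<alpha> \<beta> a b) (axis 3 1) = Complex (-1) 0"
  by (simp_all add: slc_apply eb1_def eb2_def eb3_def axis_def complex_eq_iff field_simps)

lemma Psi_slc: "\<alpha> > 0 \<Longrightarrow> Psi (slc \<alpha> \<beta> a b) = (\<alpha>, \<beta>, a, b * \<alpha>)"
proof -
  assume al: "\<alpha> > 0"
  have "\<beta>^2 - 2*(\<beta>^2/2 - \<alpha>^2/2) = \<alpha>^2" by simp
  hence "sqrt ((-\<beta>)^2 - 2*(\<beta>^2/2 - \<alpha>^2/2)) = \<alpha>" using al by simp
  moreover have "a - b*\<beta> - \<beta>^2/2 + \<beta>^2/2 + (\<beta> + b + -\<beta>) * \<beta> = a" by (simp add: algebra_simps)
  moreover have "\<beta> + b + -\<beta> = b" by simp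
  ultimately show ?thesis unfolding Psi_def Let_def slc_ax by simp
qed

lemma Psi_Phi: "p \<in> PPar \<Longrightarrow> Psi (Phi p) = p"
proof -
  assume p: "p \<in> PPar"
  obtain x y z w where pp: "p = (x,y,z,w)" by (metis prod.collapse)
  have x: "x > 0" using p pp by (simp add: PPar_def)
  have "Psi (Phi p) = (x, y, z, w/x * x)" unfolding pp Phi_def using Psi_slc[OF x] by simp
  also have "w/x * x = w" using x by simp
  finally show ?thesis using pp by simp
qed

lemma convex_PPar: "convex PPar"
  unfolding convex_def
proof (intro ballI allI impI)
  fix p q :: "real \<times> real \<times> real \<times> real" and u v :: real
  assume p: "p \<in> PPar" and q: "q \<in> PPar" and u: "0 \<le> u" and v: "0 \<le> v" and uv: "u + v = 1"
  obtain a1 b1 c1 d1 where pp: "p = (a1,b1,c1,d1)" by (metis prod.collapse)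
  obtain a2 b2 c2 d2 where qq: "q = (a2,b2,c2,d2)" by (metis prod.collapse)
  have h1: "a1 > 0" "c1 > a1^2/6 + \<bar>d1\<bar>/2" using p pp by (auto simp: PPar_def)
  have h2: "a2 > 0" "c2 > a2^2/6 + \<bar>d2\<bar>/2" using q qq by (auto simp: PPar_def)
  have vv: "v = 1 - u" using uv by simp
  have pos: "u * a1 + v * a2 > 0"
  proof (cases "u = 0")
    case True thus ?thesis using vv h2 by simp
  next
    case False hence "u * a1 > 0" using u h1 by simp
    moreover have "v * a2 \<ge> 0" using v h2 by simp
    ultimately show ?thesis by linarith
  qed
  have sq: "(u * a1 + v * a2)^2 \<le> u * a1^2 + v * a2^2"
  proof -
    have "u * a1^2 + v * a2^2 - (u * a1 + v * a2)^2 = u * v * (a1 - a2)^2"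
      unfolding vv by (simp add: power2_eq_square algebra_simps)
    moreover have "u * v * (a1 - a2)^2 \<ge> 0" using u v by simp
    ultimately show ?thesis by linarith
  qed
  have ab: "\<bar>u * d1 + v * d2\<bar> \<le> u * \<bar>d1\<bar> + v * \<bar>d2\<bar>"
  proof -
    have "\<bar>u * d1 + v * d2\<bar> \<le> \<bar>u * d1\<bar> + \<bar>v * d2\<bar>" by (rule abs_triangle_ineq)
    also have "\<dots> = u * \<bar>d1\<bar> + v * \<bar>d2\<bar>" using u v by (simp add: abs_mult)
    finally show ?thesis .
  qed
  have st: "u * c1 + v * c2 > (u * a1^2 + v * a2^2)/6 + (u * \<bar>d1\<bar> + v * \<bar>d2\<bar>)/2"
  proof (cases "u = 0")
    case True thus ?thesis using vv h2 by simp
  next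
    case False
    hence "u * c1 > u * (a1^2/6 + \<bar>d1\<bar>/2)" using u h1 by simp
    moreover have "v * c2 \<ge> v * (a2^2/6 + \<bar>d2\<bar>/2)" using v h2 by (simp add: mult_left_mono)
    moreover have "u * (a1^2/6 + \<bar>d1\<bar>/2) + v * (a2^2/6 + \<bar>d2\<bar>/2) = (u * a1^2 + v * a2^2)/6 + (u * \<bar>d1\<bar> + v * \<bar>d2\<bar>)/2"
      by (simp add: add_divide_distrib algebra_simps)
    ultimately show ?thesis by linarith
  qed
  have eq: "u *\<^sub>R p + v *\<^sub>R q = (u * a1 + v * a2, u * b1 + v * b2, u * c1 + v * c2, u * d1 + v * d2)"
    by (simp add: pp qq)
  have "(u * a1 + v * a2)^2/6 \<le> (u * a1^2 + v * a2^2)/6" using sq by simp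
  moreover have "\<bar>u * d1 + v * d2\<bar>/2 \<le> (u * \<bar>d1\<bar> + v * \<bar>d2\<bar>)/2" using ab by simp
  ultimately have "(u * a1 + v * a2)^2/6 + \<bar>u * d1 + v * d2\<bar>/2 < u * c1 + v * c2"
    using st by linarith
  thus "u *\<^sub>R p + v *\<^sub>R q \<in> PPar" unfolding eq PPar_def using pos by simp
qed

lemma slc_in_SS: "\<alpha> > 0 \<Longrightarrow> a > \<alpha>^2/6 + \<bar>b\<bar>*\<alpha>/2 \<Longrightarrow> slc \<alpha> \<beta> a b \<in> SS"
  unfolding SS_def by (auto simp: slc_apply)

lemma SS_elim: "W \<in> SS \<Longrightarrow> \<exists>\<alpha> \<beta> a b. W = slc \<alpha> \<beta> a b \<and> \<alpha> > 0 \<and> a > \<alpha>^2/6 + \<bar>b\<bar>*\<alpha>/2"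
  unfolding SS_eq mem_Collect_eq by metis

lemma SS_Phi: "Phi ` PPar = SS"
proof (intro set_eqI iffI)
  fix W assume "W \<in> Phi ` PPar"
  then obtain p where p: "p \<in> PPar" "W = Phi p" by (rule imageE) auto
  obtain x y z w where pp: "p = (x,y,z,w)" by (metis prod.collapse)
  have W: "W = slc x y z (w/x)" unfolding p(2) pp Phi_def by simp
  have x: "x > 0" using p(1) unfolding pp PPar_def by simp
  have z: "z > x^2/6 + \<bar>w\<bar>/2" using p(1) unfolding pp PPar_def by simp
  have "\<bar>w / x * x\<bar> = \<bar>w / x\<bar> * x" using x by (simp only: abs_mult abs_of_pos)
  moreover have "w / x * x = w" using x by simp
  ultimately have "\<bar>w / x\<bar> * x = \<bar>w\<bar>" by simp
  hence "z > x^2/6 + \<bar>w/x\<bar>*x/2" using z by simp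
  thus "W \<in> SS" unfolding W using x by (rule slc_in_SS[rotated])
next
  fix W assume "W \<in> SS"
  then obtain \<alpha> \<beta> a b where W: "W = slc \<alpha> \<beta> a b" "\<alpha> > 0" "a > \<alpha>^2/6 + \<bar>b\<bar> * \<alpha>/2"
    using SS_elim by blast
  have "(\<alpha>, \<beta>, a, b * \<alpha>) \<in> PPar" using W by (simp add: PPar_def abs_mult)
  moreover have "Phi (\<alpha>, \<beta>, a, b * \<alpha>) = W" using W by (simp add: Phi_def)
  ultimately show "W \<in> Phi ` PPar" by (intro image_eqI[where x="(\<alpha>, \<beta>, a, b * \<alpha>)"]) auto
qed

lemma SS_simply_connected: "simply_connected SS"
proof (rule simply_connected_retraction_gen[of PPar Phi SS Psi])
  show "simply_connected PPar" by (rule convex_imp_simply_connected[OF convex_PPar])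
  show "continuous_on PPar Phi" by (rule Phi_cont)
  show "Phi ` PPar = SS" by (rule SS_Phi)
  show "continuous_on SS Psi" by (rule Psi_cont)
  show "Psi \<in> SS \<rightarrow> PPar"
  proof
    fix y assume "y \<in> SS"
    hence "y \<in> Phi ` PPar" by (simp only: SS_Phi)
    then obtain p where "p \<in> PPar" "y = Phi p" by (rule imageE) auto
    thus "Psi y \<in> PPar" using Psi_Phi by simp
  qed
  show "Phi (Psi y) = y" if "y \<in> SS" for y
  proof -
    have "y \<in> Phi ` PPar" using \<open>y \<in> SS\<close> by (simp only: SS_Phi)
    then obtain p where "p \<in> PPar" "y = Phi p" by (rule imageE) auto
    thus ?thesis using Psi_Phi by simp
  qed
qed





lemma quad_fact:
  fixes k0 k1 k2 :: real
  assumes k2: "k2 > 0" and D: "k1^2 - 2*k2*k0 > 0"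
  defines "tp \<equiv> (- k1 + sqrt (k1^2 - 2*k2*k0)) / k2" and "tm \<equiv> (- k1 - sqrt (k1^2 - 2*k2*k0)) / k2"
  shows "k0 + k1 * t + k2 * t^2/2 = (k2/2) * (t - tm) * (t - tp)" and "tm < tp"
proof -
  let ?s = "sqrt (k1^2 - 2*k2*k0)"
  have s2: "?s^2 = k1^2 - 2*k2*k0" using D by simp
  have "(k2/2) * (t - tm) * (t - tp) = (k2/2) * (t^2 + 2*k1/k2 * t + (k1^2 - ?s^2)/k2^2)"
    unfolding tp_def tm_def using k2 by (simp add: field_simps power2_eq_square)
  also have "\<dots> = k0 + k1 * t + k2 * t^2/2" unfolding s2 using k2 by (simp add: field_simps power2_eq_square)
  finally show "k0 + k1 * t + k2 * t^2/2 = (k2/2) * (t - tm) * (t - tp)" by simp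
  have "?s > 0" using D by simp
  thus "tm < tp" unfolding tp_def tm_def using k2 by (simp add: divide_strict_right_mono)
qed

lemma slice_solve:
  fixes k0 k1 k2 r0 r1 r2 :: real
  assumes k2: "k2 > 0" and D: "k1^2 - 2*k2*k0 > 0"
  and Gm: "r0 + r1 * ((- k1 - sqrt (k1^2 - 2*k2*k0)) / k2) + r2 * ((- k1 - sqrt (k1^2 - 2*k2*k0)) / k2)^2/2 - ((- k1 - sqrt (k1^2 - 2*k2*k0)) / k2)^3/6 < 0"
  and Gp: "r0 + r1 * ((- k1 + sqrt (k1^2 - 2*k2*k0)) / k2) + r2 * ((- k1 + sqrt (k1^2 - 2*k2*k0)) / k2)^2/2 - ((- k1 + sqrt (k1^2 - 2*k2*k0)) / k2)^3/6 > 0"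
  shows "\<exists>\<alpha> \<beta> a b c d. \<alpha> > 0 \<and> a > \<alpha>^2/6 + \<bar>b\<bar>*\<alpha>/2 \<and> d > 0 \<and>
     d*k2 = 1 \<and> d*k1 = -\<beta> \<and> d*k0 = \<beta>^2/2 - \<alpha>^2/2 \<and>
     r2 + c*k2 = \<beta> + b \<and> r1 + c*k1 = a - b*\<beta> - \<beta>^2/2 \<and> r0 + c*k0 = \<beta>^3/6 + b*\<beta>^2/2 - a*\<beta>"
proof -
  define s where "s = sqrt (k1^2 - 2*k2*k0)"
  have s0: "s > 0" using D by (simp add: s_def)
  have s2: "s^2 = k1^2 - 2*k2*k0" using D by (simp add: s_def)
  define G where "G t = r0 + r1 * t + r2 * t^2/2 - t^3/6" for t
  define H where "H t = k0 + k1 * t + k2 * t^2/2" for t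
  define \<beta> where "\<beta> = - k1 / k2"
  define \<alpha> where "\<alpha> = s / k2"
  have al: "\<alpha> > 0" using s0 k2 by (simp add: \<alpha>_def)
  have tp: "(- k1 + s) / k2 = \<beta> + \<alpha>" and tm: "(- k1 - s) / k2 = \<beta> - \<alpha>"
    by (simp_all add: \<alpha>_def \<beta>_def diff_divide_distrib add_divide_distrib)
  have Gm': "G (\<beta> - \<alpha>) < 0" using Gm unfolding G_def s_def[symmetric] tm by simp
  have Gp': "G (\<beta> + \<alpha>) > 0" using Gp unfolding G_def s_def[symmetric] tp by simp
  have Hp: "H (\<beta> + \<alpha>) = 0" and Hm: "H (\<beta> - \<alpha>) = 0"
    using quad_fact(1)[OF k2 D, of "\<beta> + \<alpha>"] quad_fact(1)[OF k2 D, of "\<beta> - \<alpha>"]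
    unfolding H_def s_def[symmetric] tp tm by simp_all
  define Pp where "Pp = G (\<beta> + \<alpha>) / \<alpha>"
  define Pm where "Pm = - G (\<beta> - \<alpha>) / \<alpha>"
  have Pp0: "Pp > 0" unfolding Pp_def using Gp' al by (intro divide_pos_pos) auto
  have Pm0: "Pm > 0" unfolding Pm_def using Gm' al by (intro divide_pos_pos) auto
  define a where "a = \<alpha>^2/6 + (Pp + Pm)/2"
  define b where "b = (Pp - Pm)/\<alpha>"
  define d where "d = 1/k2"
  define c where "c = (\<beta> + b - r2)/k2"
  have ac: "a > \<alpha>^2/6 + \<bar>b\<bar>*\<alpha>/2"
  proof -
    have "b*\<alpha> = Pp - Pm" using al unfolding b_def by simp
    hence "\<bar>b\<bar>*\<alpha> = \<bar>Pp - Pm\<bar>" using al by (metis abs_mult abs_of_pos)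
    moreover have "\<bar>Pp - Pm\<bar> < Pp + Pm" using Pp0 Pm0 by (cases "Pp \<le> Pm") (simp_all add: abs_of_nonpos abs_of_nonneg)
    ultimately have "\<bar>b\<bar>*\<alpha>/2 < (Pp + Pm)/2" by simp
    thus ?thesis unfolding a_def by simp
  qed
  have e1: "d*k2 = 1" using k2 by (simp add: d_def)
  have e2: "d*k1 = -\<beta>" using k2 by (simp add: d_def \<beta>_def)
  have e3: "d*k0 = \<beta>^2/2 - \<alpha>^2/2"
  proof -
    have "\<beta>^2 - \<alpha>^2 = (k1^2 - s^2)/k2^2" unfolding \<alpha>_def \<beta>_def by (simp add: power_divide diff_divide_distrib)
    also have "\<dots> = 2*k0/k2" unfolding s2 using k2 by (simp add: field_simps power2_eq_square)
    finally show ?thesis by (simp add: d_def field_simps)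
  qed
  have e4: "r2 + c*k2 = \<beta> + b" using k2 by (simp add: c_def)
  define E0 where "E0 = \<beta>^3/6 + b*\<beta>^2/2 - a*\<beta>"
  define E1 where "E1 = a - b*\<beta> - \<beta>^2/2"
  define S where "S t = b*(t-\<beta>)^2/2 + a*(t-\<beta>) - (t-\<beta>)^3/6" for t
  have Sexp: "S t = E0 + E1 * t + (\<beta> + b) * t^2/2 - t^3/6" for t
    unfolding S_def E0_def E1_def by (simp add: power2_eq_square power3_eq_cube field_simps)
  have lin0: "G t + c * H t - S t = (r0 + c*k0 - E0) + (r1 + c*k1 - E1) * t + (r2 + c*k2 - (\<beta> + b)) * t^2/2" for t
    unfolding G_def H_def Sexp by (simp add: field_simps)
  have lin: "G t + c * H t - S t = (r0 + c*k0 - E0) + (r1 + c*k1 - E1) * t" for t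
    using lin0[of t] e4 by simp
  have Sp: "S (\<beta> + \<alpha>) = G (\<beta> + \<alpha>)"
  proof -
    have "S (\<beta> + \<alpha>) = \<alpha> * (a - \<alpha>^2/6 + b*\<alpha>/2)" unfolding S_def by (simp add: power2_eq_square power3_eq_cube field_simps)
    also have "a - \<alpha>^2/6 + b*\<alpha>/2 = Pp" unfolding a_def b_def using al by (simp add: field_simps)
    finally show ?thesis using al by (simp add: Pp_def)
  qed
  have Sm: "S (\<beta> - \<alpha>) = G (\<beta> - \<alpha>)"
  proof -
    have "S (\<beta> - \<alpha>) = - (\<alpha> * (a - \<alpha>^2/6 - b*\<alpha>/2))" unfolding S_def by (simp add: power2_eq_square power3_eq_cube field_simps)
    also have "a - \<alpha>^2/6 - b*\<alpha>/2 = Pm" unfolding a_def b_def using al by (simp add: field_simps)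
    finally show ?thesis using al by (simp add: Pm_def)
  qed
  have z1: "(r0 + c*k0 - E0) + (r1 + c*k1 - E1) * (\<beta> + \<alpha>) = 0" using lin[of "\<beta> + \<alpha>"] Sp Hp by simp
  have z2: "(r0 + c*k0 - E0) + (r1 + c*k1 - E1) * (\<beta> - \<alpha>) = 0" using lin[of "\<beta> - \<alpha>"] Sm Hm by simp
  from z1 z2 have "(r1 + c*k1 - E1) * (2*\<alpha>) = 0" by (simp add: algebra_simps)
  hence e5: "r1 + c*k1 = E1" using al by simp
  with z1 have e6: "r0 + c*k0 = E0" by simp
  have "d > 0" using k2 by (simp add: d_def)
  thus ?thesis using al ac e1 e2 e3 e4 e5 e6 unfolding E0_def E1_def by blast
qed




definition Gc :: "real \<Rightarrow> real \<Rightarrow> real \<Rightarrow> real \<Rightarrow> real" where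
  "Gc r0 r1 r2 t = r0 + r1 * t + r2 * t^2/2 - t^3/6"
definition Hc :: "real \<Rightarrow> real \<Rightarrow> real \<Rightarrow> real \<Rightarrow> real" where
  "Hc k0 k1 k2 t = k0 + k1 * t + k2 * t^2/2"
definition tpf :: "real \<Rightarrow> real \<Rightarrow> real \<Rightarrow> real" where
  "tpf k0 k1 k2 = (- k1 + sqrt (k1^2 - 2*k2*k0)) / k2"
definition tmf :: "real \<Rightarrow> real \<Rightarrow> real \<Rightarrow> real" where
  "tmf k0 k1 k2 = (- k1 - sqrt (k1^2 - 2*k2*k0)) / k2"

lemma Gc_cont[continuous_intros]: "continuous_on S (Gc r0 r1 r2)"
  unfolding Gc_def by (intro continuous_intros) auto

lemma cubic_small:
  fixes t r0 r1 r2 :: real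
  assumes t1: "\<bar>t\<bar> \<ge> 1" and tK: "\<bar>t\<bar> > 6 * (\<bar>r0\<bar> + \<bar>r1\<bar> + \<bar>r2\<bar>)"
  shows "\<bar>r0 + r1 * t + r2 * t^2/2\<bar> < \<bar>t\<bar>^3/6"
proof -
  have "\<bar>t\<bar> * 1 \<le> \<bar>t\<bar> * \<bar>t\<bar>" using mult_left_mono[OF t1 abs_ge_zero[of t]] .
  hence tt: "\<bar>t\<bar> \<le> t^2" by (simp add: power2_eq_square abs_mult_self_eq)
  have "\<bar>r0 + r1 * t + r2 * t^2/2\<bar> \<le> \<bar>r0\<bar> + \<bar>r1\<bar> * \<bar>t\<bar> + \<bar>r2\<bar> * t^2/2"
    by (rule order.trans[OF abs_triangle_ineq]) (simp add: abs_mult abs_triangle_ineq order.trans[OF abs_triangle_ineq])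
  also have "\<dots> \<le> (\<bar>r0\<bar> + \<bar>r1\<bar> + \<bar>r2\<bar>) * t^2"
  proof -
    have "\<bar>r0\<bar> \<le> \<bar>r0\<bar> * t^2" using t1 tt by (simp add: mult_le_cancel_left1)
    moreover have "\<bar>r1\<bar> * \<bar>t\<bar> \<le> \<bar>r1\<bar> * t^2" using tt by (simp add: mult_left_mono)
    moreover have "\<bar>r2\<bar> * t^2/2 \<le> \<bar>r2\<bar> * t^2" by simp
    ultimately show ?thesis by (simp only: distrib_right)
  qed
  also have "\<dots> < \<bar>t\<bar>/6 * t^2"
    using tK t1 by (intro mult_strict_right_mono) auto
  also have "\<dots> = \<bar>t\<bar>^3/6" by (simp add: power2_eq_square power3_eq_cube)
  finally show ?thesis .
qed

lemma Gc_neg_big: assumes "t \<ge> 1" "t > 6 * (\<bar>r0\<bar> + \<bar>r1\<bar> + \<bar>r2\<bar>)" shows "Gc r0 r1 r2 t < 0"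
proof -
  have "\<bar>r0 + r1 * t + r2 * t^2/2\<bar> < \<bar>t\<bar>^3/6" using cubic_small[of t r0 r1 r2] assms by simp
  moreover have "\<bar>t\<bar>^3 = t^3" using assms by simp
  moreover have "r0 + r1 * t + r2 * t^2/2 \<le> \<bar>r0 + r1 * t + r2 * t^2/2\<bar>" by (rule abs_ge_self)
  ultimately show ?thesis unfolding Gc_def by linarith
qed

lemma Gc_pos_small: assumes "t \<le> -1" "-t > 6 * (\<bar>r0\<bar> + \<bar>r1\<bar> + \<bar>r2\<bar>)" shows "Gc r0 r1 r2 t > 0"
proof -
  have "\<bar>r0 + r1 * t + r2 * t^2/2\<bar> < \<bar>t\<bar>^3/6" using cubic_small[of t r0 r1 r2] assms by simp
  moreover have "\<bar>t\<bar>^3 = - (t^3)" using assms by (simp add: abs_if power3_eq_cube)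
  moreover have "-(r0 + r1 * t + r2 * t^2/2) \<le> \<bar>r0 + r1 * t + r2 * t^2/2\<bar>" by (rule abs_ge_minus_self)
  ultimately show ?thesis unfolding Gc_def by linarith
qed

lemma Gc_root_bound: assumes "Gc r0 r1 r2 t = 0" shows "\<bar>t\<bar> \<le> 1 + 6 * (\<bar>r0\<bar> + \<bar>r1\<bar> + \<bar>r2\<bar>)"
proof (rule ccontr)
  assume "\<not> ?thesis"
  hence "t > 1 + 6 * (\<bar>r0\<bar> + \<bar>r1\<bar> + \<bar>r2\<bar>) \<or> -t > 1 + 6 * (\<bar>r0\<bar> + \<bar>r1\<bar> + \<bar>r2\<bar>)" by linarith
  moreover have "6 * (\<bar>r0\<bar> + \<bar>r1\<bar> + \<bar>r2\<bar>) \<ge> 0" by simp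
  ultimately show False
  proof (elim disjE)
    assume "t > 1 + 6 * (\<bar>r0\<bar> + \<bar>r1\<bar> + \<bar>r2\<bar>)" "6 * (\<bar>r0\<bar> + \<bar>r1\<bar> + \<bar>r2\<bar>) \<ge> 0"
    hence "Gc r0 r1 r2 t < 0" by (intro Gc_neg_big) auto
    thus False using assms by simp
  next
    assume "-t > 1 + 6 * (\<bar>r0\<bar> + \<bar>r1\<bar> + \<bar>r2\<bar>)" "6 * (\<bar>r0\<bar> + \<bar>r1\<bar> + \<bar>r2\<bar>) \<ge> 0"
    hence "Gc r0 r1 r2 t > 0" by (intro Gc_pos_small) auto
    thus False using assms by simp
  qed
qed

lemma T1:
  assumes k2: "k2 > 0" and D: "k1^2 - 2*k2*k0 > 0"
  and Gm: "Gc r0 r1 r2 (tmf k0 k1 k2) < 0" and Gp: "Gc r0 r1 r2 (tpf k0 k1 k2) > 0"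
  shows "\<exists>u1 u2 u3. u1 < u2 \<and> u2 < u3 \<and> Gc r0 r1 r2 u1 = 0 \<and> Gc r0 r1 r2 u2 = 0 \<and> Gc r0 r1 r2 u3 = 0 \<and>
     Hc k0 k1 k2 u1 > 0 \<and> Hc k0 k1 k2 u2 < 0 \<and> Hc k0 k1 k2 u3 > 0"
proof -
  define tm where "tm = tmf k0 k1 k2"
  define tp where "tp = tpf k0 k1 k2"
  define K where "K = 6 * (\<bar>r0\<bar> + \<bar>r1\<bar> + \<bar>r2\<bar>)"
  have K0: "K \<ge> 0" by (simp add: K_def)
  have fac: "Hc k0 k1 k2 t = (k2/2) * (t - tm) * (t - tp)" for t
    using quad_fact(1)[OF k2 D] unfolding Hc_def tm_def tp_def tmf_def tpf_def by simp
  have mp: "tm < tp" using quad_fact(2)[OF k2 D] unfolding tm_def tp_def tmf_def tpf_def by simp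
  define L where "L = -(1 + K + \<bar>tm\<bar>)"
  define U where "U = 1 + K + \<bar>tp\<bar>"
  have GL: "Gc r0 r1 r2 L > 0" by (rule Gc_pos_small) (use K0 in \<open>auto simp: L_def K_def\<close>)
  have GU: "Gc r0 r1 r2 U < 0" by (rule Gc_neg_big) (use K0 in \<open>auto simp: U_def K_def\<close>)
  have Lm: "L < tm" by (simp add: L_def) (use K0 in linarith)
  have Up: "tp < U" by (simp add: U_def) (use K0 in linarith)
  obtain u1 where u1: "L \<le> u1" "u1 \<le> tm" "Gc r0 r1 r2 u1 = 0"
    using IVT2'[of "Gc r0 r1 r2" tm 0 L] GL Gm Lm by (auto simp: tm_def intro: continuous_intros)
  obtain u2 where u2: "tm \<le> u2" "u2 \<le> tp" "Gc r0 r1 r2 u2 = 0"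
    using IVT'[of "Gc r0 r1 r2" tm 0 tp] Gp Gm mp by (auto simp: tm_def tp_def intro: continuous_intros)
  obtain u3 where u3: "tp \<le> u3" "u3 \<le> U" "Gc r0 r1 r2 u3 = 0"
    using IVT2'[of "Gc r0 r1 r2" U 0 tp] GU Gp Up by (auto simp: tp_def intro: continuous_intros)
  have "u1 \<noteq> tm" using u1 Gm by (auto simp: tm_def)
  hence u1': "u1 < tm" using u1 by simp
  have "u2 \<noteq> tm" "u2 \<noteq> tp" using u2 Gm Gp by (auto simp: tm_def tp_def)
  hence u2': "tm < u2" "u2 < tp" using u2 by simp_all
  have "u3 \<noteq> tp" using u3 Gp by (auto simp: tp_def)
  hence u3': "tp < u3" using u3 by simp
  have "Hc k0 k1 k2 u1 > 0" unfolding fac using k2 u1' mp by (intro mult_neg_neg mult_pos_neg) auto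
  moreover have "Hc k0 k1 k2 u2 < 0" unfolding fac using k2 u2' by (intro mult_pos_neg mult_pos_pos) auto
  moreover have "Hc k0 k1 k2 u3 > 0" unfolding fac using k2 u3' mp by (intro mult_pos_pos) auto
  ultimately show ?thesis using u1' u2' u3' u1 u2 u3 by (intro exI[of _ u1] exI[of _ u2] exI[of _ u3]) auto
qed

lemma quad3:
  fixes a b c x y z :: real
  assumes "x \<noteq> y" "x \<noteq> z" "y \<noteq> z"
    and "a + b*x + c*x^2 = 0" "a + b*y + c*y^2 = 0" "a + b*z + c*z^2 = 0"
  shows "a = 0 \<and> b = 0 \<and> c = 0"
proof -
  have "(x - y) * (b + c*(x + y)) = 0" using assms(4,5) by (simp add: power2_eq_square algebra_simps)
  hence 1: "b + c*(x + y) = 0" using assms(1) by simp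
  have "(x - z) * (b + c*(x + z)) = 0" using assms(4,6) by (simp add: power2_eq_square algebra_simps)
  hence 2: "b + c*(x + z) = 0" using assms(2) by simp
  have "c * (y - z) = (b + c*(x + y)) - (b + c*(x + z))" by (simp add: algebra_simps)
  hence "c * (y - z) = 0" using 1 2 by simp
  hence c: "c = 0" using assms(3) by simp
  with 1 have b: "b = 0" by simp
  with c assms(4) show ?thesis by simp
qed

lemma T2:
  assumes o: "u1 < u2" "u2 < u3" and G: "Gc r0 r1 r2 u1 = 0" "Gc r0 r1 r2 u2 = 0" "Gc r0 r1 r2 u3 = 0"
  and H: "Hc k0 k1 k2 u1 > 0" "Hc k0 k1 k2 u2 < 0" "Hc k0 k1 k2 u3 > 0"
  shows "k2 > 0 \<and> k1^2 - 2*k2*k0 > 0 \<and> Gc r0 r1 r2 (tmf k0 k1 k2) < 0 \<and> Gc r0 r1 r2 (tpf k0 k1 k2) > 0"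
proof -
  have id: "(u3-u2) * Hc k0 k1 k2 u1 + (u2-u1) * Hc k0 k1 k2 u3 - (u3-u1) * Hc k0 k1 k2 u2
      = (k2/2) * ((u2-u1)*(u3-u2)*(u3-u1))"
    unfolding Hc_def by (simp add: power2_eq_square field_simps)
  have "(u3-u2) * Hc k0 k1 k2 u1 + (u2-u1) * Hc k0 k1 k2 u3 - (u3-u1) * Hc k0 k1 k2 u2 > 0"
  proof -
    have "(u3-u2) * Hc k0 k1 k2 u1 > 0" using o H by simp
    moreover have "(u2-u1) * Hc k0 k1 k2 u3 > 0" using o H by simp
    moreover have "(u3-u1) * Hc k0 k1 k2 u2 < 0" using o H by (simp add: mult_pos_neg)
    ultimately show ?thesis by linarith
  qed
  hence pp: "(k2/2) * ((u2-u1)*(u3-u2)*(u3-u1)) > 0" using id by simp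
  have "(u2-u1)*(u3-u2)*(u3-u1) > 0" using o by simp
  hence k2: "k2 > 0"
  proof -
    assume P: "(u2-u1)*(u3-u2)*(u3-u1) > 0"
    show "k2 > 0"
    proof (rule ccontr)
      assume "\<not> k2 > 0"
      hence "k2/2 \<le> 0" by simp
      hence "(k2/2) * ((u2-u1)*(u3-u2)*(u3-u1)) \<le> 0" using P by (intro mult_nonpos_nonneg) auto
      thus False using pp by simp
    qed
  qed
  have "2*k2 * Hc k0 k1 k2 u2 = (k2*u2 + k1)^2 - (k1^2 - 2*k2*k0)"
    unfolding Hc_def by (simp add: power2_eq_square field_simps)
  moreover have "2*k2 * Hc k0 k1 k2 u2 < 0" using k2 H by (simp add: mult_pos_neg)
  moreover have "(k2*u2 + k1)^2 \<ge> 0" by simp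
  ultimately have D: "k1^2 - 2*k2*k0 > 0" by linarith
  define tm where "tm = tmf k0 k1 k2"
  define tp where "tp = tpf k0 k1 k2"
  have fac: "Hc k0 k1 k2 t = (k2/2) * ((t - tm) * (t - tp))" for t
    using quad_fact(1)[OF k2 D] unfolding Hc_def tm_def tp_def tmf_def tpf_def by simp
  have mp: "tm < tp" using quad_fact(2)[OF k2 D] unfolding tm_def tp_def tmf_def tpf_def by simp
  have "(u2 - tm) * (u2 - tp) < 0" using H(2) k2 unfolding fac by (simp add: mult_less_0_iff)
  hence u2: "tm < u2" "u2 < tp" using mp by (auto simp: mult_less_0_iff)
  have "(u1 - tm) * (u1 - tp) > 0" using H(1) k2 unfolding fac by (simp add: zero_less_mult_iff)
  hence u1: "u1 < tm" using u2 o by (auto simp: zero_less_mult_iff)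
  have "(u3 - tm) * (u3 - tp) > 0" using H(3) k2 unfolding fac by (simp add: zero_less_mult_iff)
  hence u3: "tp < u3" using u2 o by (auto simp: zero_less_mult_iff)
  define e1 where "e1 = u1 + u2 + u3"
  define e2 where "e2 = u1*u2 + u1*u3 + u2*u3"
  define e3 where "e3 = u1*u2*u3"
  have Qe: "Gc r0 r1 r2 t + (t-u1)*(t-u2)*(t-u3)/6 = (r0 - e3/6) + (r1 + e2/6)*t + (r2/2 - e1/6)*t^2" for t
    unfolding Gc_def e1_def e2_def e3_def by (simp add: power2_eq_square power3_eq_cube field_simps)
  have "(r0 - e3/6) = 0 \<and> (r1 + e2/6) = 0 \<and> (r2/2 - e1/6) = 0"
    by (rule quad3[of u1 u2 u3]) (use o G Qe[of u1] Qe[of u2] Qe[of u3] in auto)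
  hence q1: "r0 - e3/6 = 0" and q2: "r1 + e2/6 = 0" and q3: "r2/2 - e1/6 = 0" by auto
  have Gf0: "Gc r0 r1 r2 t + (t-u1)*(t-u2)*(t-u3)/6 = 0" for t
    using Qe[of t] by (simp only: q1 q2 q3 mult_zero_left add_0 add_0_right)
  have Gf: "Gc r0 r1 r2 t = - ((t-u1)*(t-u2)*(t-u3))/6" for t using Gf0[of t] by linarith
  have "(tm-u1)*(tm-u2)*(tm-u3) > 0" using u1 u2 o u3 mp by (intro mult_neg_neg mult_pos_neg) auto
  hence "Gc r0 r1 r2 tm < 0" unfolding Gf by simp
  moreover have "(tp-u1)*(tp-u2)*(tp-u3) < 0" using u1 u2 o u3 mp by (intro mult_pos_neg mult_pos_pos) auto
  hence "Gc r0 r1 r2 tp > 0" unfolding Gf by simp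
  ultimately show ?thesis using k2 D by (simp add: tm_def tp_def)
qed




definition zc :: "charge \<Rightarrow> 4 \<Rightarrow> complex" where "zc Z j = blinfun_apply Z (axis j 1)"
definition nz :: "charge \<Rightarrow> 4 \<Rightarrow> complex" where "nz Z j = - zc Z j / zc Z 3"

definition GZ :: "charge \<Rightarrow> real \<Rightarrow> real" where "GZ Z = Gc (Re (nz Z 0)) (Re (nz Z 1)) (Re (nz Z 2))"
definition HZ :: "charge \<Rightarrow> real \<Rightarrow> real" where "HZ Z = Hc (Im (nz Z 0)) (Im (nz Z 1)) (Im (nz Z 2))"

definition OSet :: "charge set" where
 "OSet = {Z. zc Z 3 \<noteq> 0 \<and> Im (nz Z 2) > 0 \<and> Im (nz Z 1)^2 - 2 * Im (nz Z 2) * Im (nz Z 0) > 0 \<and>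
    GZ Z (tmf (Im (nz Z 0)) (Im (nz Z 1)) (Im (nz Z 2))) < 0 \<and> GZ Z (tpf (Im (nz Z 0)) (Im (nz Z 1)) (Im (nz Z 2))) > 0}"

lemma lam_apply:
  assumes w: "zc Z 3 \<noteq> 0"
  shows "(-1 / zc Z 3) * blinfun_apply Z v = of_real (v$0) * nz Z 0 + of_real (v$1) * nz Z 1 + of_real (v$2) * nz Z 2 - of_real (v$3)"
proof -
  have "blinfun_apply Z v = of_real (v$0) * zc Z 0 + of_real (v$1) * zc Z 1 + of_real (v$2) * zc Z 2 + of_real (v$3) * zc Z 3"
    using apply_decomp[of Z v] by (simp add: zc_def scaleR_conv_of_real)
  thus ?thesis using w by (simp add: nz_def field_simps)
qed

definition gmat :: "real \<Rightarrow> real \<Rightarrow> real \<Rightarrow> real \<Rightarrow> real^2^2" where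
  "gmat a b c d = vector [vector [a, b], vector [c, d]]"

lemma gmat_det: "det (gmat a b c d) = a * d - b * c"
  by (simp add: gmat_def det_2)

lemma gmat_act: "gl2_act (gmat a b c d) u = Complex (a * Re u + b * Im u) (c * Re u + d * Im u)"
  by (simp add: gmat_def gl2_act_def)

lemma gmat_of: "g = gmat (g$1$1) (g$1$2) (g$2$1) (g$2$2)"
  unfolding gmat_def by (simp add: vec_eq_iff forall_2)

lemma existence:
  assumes Z: "Z \<in> OSet"
  shows "\<exists>W. W \<in> SS \<and> in_GL2_orbit W Z"
proof -
  define w where "w = zc Z 3"
  have w: "w \<noteq> 0" using Z by (simp add: OSet_def w_def)
  define k0 where "k0 = Im (nz Z 0)"
  define k1 where "k1 = Im (nz Z 1)"
  define k2 where "k2 = Im (nz Z 2)"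
  define r0 where "r0 = Re (nz Z 0)"
  define r1 where "r1 = Re (nz Z 1)"
  define r2 where "r2 = Re (nz Z 2)"
  have k2: "k2 > 0" and D: "k1^2 - 2*k2*k0 > 0" using Z by (simp_all add: OSet_def k0_def k1_def k2_def)
  have Gm: "Gc r0 r1 r2 (tmf k0 k1 k2) < 0" and Gp: "Gc r0 r1 r2 (tpf k0 k1 k2) > 0"
    using Z by (simp_all add: OSet_def GZ_def k0_def k1_def k2_def r0_def r1_def r2_def)
  obtain \<alpha> \<beta> a b c d where s: "\<alpha> > 0" "a > \<alpha>^2/6 + \<bar>b\<bar>*\<alpha>/2" "d > 0"
     "d*k2 = 1" "d*k1 = -\<beta>" "d*k0 = \<beta>^2/2 - \<alpha>^2/2"
     "r2 + c*k2 = \<beta> + b" "r1 + c*k1 = a - b*\<beta> - \<beta>^2/2" "r0 + c*k0 = \<beta>^3/6 + b*\<beta>^2/2 - a*\<beta>"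
    using slice_solve[OF k2 D Gm[unfolded Gc_def tmf_def] Gp[unfolded Gc_def tpf_def]] by blast
  define l where "l = -1 / w"
  have l0: "l \<noteq> 0" using w by (simp add: l_def)
  define g where "g = gmat (Re l + c * Im l) (c * Re l - Im l) (d * Im l) (d * Re l)"
  have "det g = d * ((Re l)^2 + (Im l)^2)" by (simp add: g_def gmat_det power2_eq_square algebra_simps)
  moreover have "(Re l)^2 + (Im l)^2 > 0" using l0 by (simp add: complex_eq_iff sum_power2_gt_zero_iff)
  ultimately have detg: "det g > 0" using s(3) by simp
  have act: "gl2_act g u = Complex (Re (l * u) + c * Im (l * u)) (d * Im (l * u))" for u
    by (simp add: g_def gmat_act algebra_simps)
  have eq: "blinfun_apply (slc \<alpha> \<beta> a b) v = gl2_act g (blinfun_apply Z v)" for v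
  proof -
    have lz: "l * blinfun_apply Z v = of_real (v$0) * nz Z 0 + of_real (v$1) * nz Z 1 + of_real (v$2) * nz Z 2 - of_real (v$3)"
      unfolding l_def w_def using lam_apply[OF w[unfolded w_def]] .
    have re: "Re (l * blinfun_apply Z v) = v$0 * r0 + v$1 * r1 + v$2 * r2 - v$3"
      unfolding lz by (simp add: r0_def r1_def r2_def)
    have im: "Im (l * blinfun_apply Z v) = v$0 * k0 + v$1 * k1 + v$2 * k2"
      unfolding lz by (simp add: k0_def k1_def k2_def)
    have R: "Re (l * blinfun_apply Z v) + c * Im (l * blinfun_apply Z v)
        = v$0 * (r0 + c*k0) + v$1 * (r1 + c*k1) + v$2 * (r2 + c*k2) - v$3"
      unfolding re im by (simp add: algebra_simps)
    have I: "d * Im (l * blinfun_apply Z v) = v$0 * (d*k0) + v$1 * (d*k1) + v$2 * (d*k2)"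
      unfolding im by (simp add: algebra_simps)
    show ?thesis unfolding act R I s(4-9)
      by (simp add: slc_apply eb1_def eb2_def eb3_def complex_eq_iff field_simps)
  qed
  have "slc \<alpha> \<beta> a b \<in> SS" using s(1,2) by (rule slc_in_SS)
  moreover have "in_GL2_orbit (slc \<alpha> \<beta> a b) Z" unfolding in_GL2_orbit_def using detg eq by blast
  ultimately show ?thesis by blast
qed

lemma slice_rigid:
  assumes W1: "W1 \<in> SS" and W2: "W2 \<in> SS" and m: "det m > 0"
    and act: "\<And>v. blinfun_apply W2 v = gl2_act m (blinfun_apply W1 v)"
  shows "W1 = W2"
proof -
  obtain \<alpha>1 \<beta>1 a1 b1 where P1: "W1 = slc \<alpha>1 \<beta>1 a1 b1" "\<alpha>1 > 0" using SS_elim[OF W1] by blast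
  obtain \<alpha>2 \<beta>2 a2 b2 where P2: "W2 = slc \<alpha>2 \<beta>2 a2 b2" "\<alpha>2 > 0" using SS_elim[OF W2] by blast
  obtain p q r s where ms: "m = gmat p q r s" using gmat_of by blast
  have e3: "Complex (-1) 0 = Complex (- p) (- r)" using act[of "axis 3 1"] unfolding P1 P2 slc_ax ms gmat_act by simp
  hence p: "p = 1" and r: "r = 0" by simp_all
  have ds: "s > 0" using m unfolding ms gmat_det p r by simp
  have e2: "Complex (\<beta>2 + b2) 1 = Complex (\<beta>1 + b1 + q) s"
    using act[of "axis 2 1"] unfolding P1 P2 slc_ax ms gmat_act p r by simp
  hence s1: "s = 1" and q: "\<beta>2 + b2 = \<beta>1 + b1 + q" by simp_all
  have e1: "Complex (a2 - b2*\<beta>2 - \<beta>2^2/2) (-\<beta>2) = gl2_act (gmat 1 q 0 1) (Complex (a1 - b1*\<beta>1 - \<beta>1^2/2) (-\<beta>1))"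
    using act[of "axis 1 1"] unfolding P1 P2 slc_ax ms p r s1 .
  hence e1': "a2 - b2*\<beta>2 - \<beta>2^2/2 = 1 * (a1 - b1*\<beta>1 - \<beta>1^2/2) + q * (-\<beta>1) \<and> -\<beta>2 = 0 * (a1 - b1*\<beta>1 - \<beta>1^2/2) + 1 * (-\<beta>1)"
    unfolding gmat_act complex.inject complex.sel .
  have be: "\<beta>2 = \<beta>1" using e1' by simp
  have a: "a2 - b2*\<beta>2 - \<beta>2^2/2 = a1 - b1*\<beta>1 - \<beta>1^2/2 - q * \<beta>1" using conjunct1[OF e1'] by simp
  have e0: "Complex (\<beta>2^3/6 + b2*\<beta>2^2/2 - a2*\<beta>2) (\<beta>2^2/2 - \<alpha>2^2/2)
       = Complex (\<beta>1^3/6 + b1*\<beta>1^2/2 - a1*\<beta>1 + q * (\<beta>1^2/2 - \<alpha>1^2/2)) (\<beta>1^2/2 - \<alpha>1^2/2)"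
    using act[of "axis 0 1"] unfolding P1 P2 slc_ax ms gmat_act p r s1 by simp
  hence c0: "\<beta>2^3/6 + b2*\<beta>2^2/2 - a2*\<beta>2 = \<beta>1^3/6 + b1*\<beta>1^2/2 - a1*\<beta>1 + q * (\<beta>1^2/2 - \<alpha>1^2/2)"
    and c1: "\<beta>2^2/2 - \<alpha>2^2/2 = \<beta>1^2/2 - \<alpha>1^2/2" by simp_all
  from c1 be have "\<alpha>2^2 = \<alpha>1^2" by simp
  hence al: "\<alpha>2 = \<alpha>1" using P1(2) P2(2) by (simp add: power2_eq_iff_nonneg)
  have bq: "b2 = b1 + q" using q be by simp
  have aa: "a2 = a1" using a bq be by (simp add: algebra_simps)
  have "q * \<alpha>1^2 = 0" using c0 bq aa be by (simp add: field_simps power2_eq_square power3_eq_cube)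
  hence "q = 0" using P1(2) by simp
  thus ?thesis using P1 P2 al be aa bq by simp
qed

lemma orbit_unique:
  assumes W1: "W1 \<in> SS" and W2: "W2 \<in> SS" and o1: "in_GL2_orbit W1 Z" and o2: "in_GL2_orbit W2 Z"
  shows "W1 = W2"
proof -
  obtain g where g: "det g > 0" "\<And>v. blinfun_apply W1 v = gl2_act g (blinfun_apply Z v)"
    using o1 unfolding in_GL2_orbit_def by blast
  obtain h where h: "det h > 0" "\<And>v. blinfun_apply W2 v = gl2_act h (blinfun_apply Z v)"
    using o2 unfolding in_GL2_orbit_def by blast
  obtain a b c d where gg: "g = gmat a b c d" using gmat_of by blast
  obtain a' b' c' d' where hh: "h = gmat a' b' c' d'" using gmat_of by blast
  define \<delta> where "\<delta> = a*d - b*c"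
  have dl: "\<delta> > 0" using g(1) unfolding gg gmat_det \<delta>_def .
  have inv: "blinfun_apply Z v = Complex ((d * Re (blinfun_apply W1 v) - b * Im (blinfun_apply W1 v))/\<delta>)
      ((a * Im (blinfun_apply W1 v) - c * Re (blinfun_apply W1 v))/\<delta>)" for v
    using dl unfolding g(2) gg gmat_act \<delta>_def by (simp add: complex_eq_iff field_simps)
  define m where "m = gmat ((a'*d - b'*c)/\<delta>) ((b'*a - a'*b)/\<delta>) ((c'*d - d'*c)/\<delta>) ((d'*a - c'*b)/\<delta>)"
  have num: "(a'*d - b'*c)*(d'*a - c'*b) - (b'*a - a'*b)*(c'*d - d'*c) = (a'*d' - b'*c') * \<delta>"
    unfolding \<delta>_def by (simp add: algebra_simps)
  have "det m = ((a'*d - b'*c)*(d'*a - c'*b) - (b'*a - a'*b)*(c'*d - d'*c)) / (\<delta> * \<delta>)"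
    unfolding m_def gmat_det using dl by (simp add: field_simps)
  also have "\<dots> = (a'*d' - b'*c') / \<delta>" unfolding num using dl by simp
  finally have "det m > 0" using h(1) dl unfolding hh gmat_det by simp
  moreover have "blinfun_apply W2 v = gl2_act m (blinfun_apply W1 v)" for v
    unfolding h(2) hh gmat_act inv[of v] m_def using dl by (simp add: complex_eq_iff field_simps)
  ultimately show ?thesis using slice_rigid[OF W1 W2] by blast
qed




definition vc :: "real \<Rightarrow> real^4" where "vc t = vec4 1 t (t^2/2) (t^3/6)"

lemma vc_cubic: "vc t \<in> twisted_cubic" "vc t \<noteq> 0"
proof -
  show "vc t \<in> twisted_cubic" unfolding twisted_cubic_def vc_def
    by (intro CollectI exI[of _ 1] exI[of _ t]) simp
  have "vc t $ 0 = 1" by (simp add: vc_def)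
  thus "vc t \<noteq> 0" by auto
qed

lemma ax3_cubic: "axis 3 1 \<in> twisted_cubic" "(axis 3 1 :: real^4) \<noteq> 0"
proof -
  have r: "root 3 6 ^ 3 = (6::real)" by (simp add: odd_real_root_pow)
  show "axis 3 1 \<in> twisted_cubic" unfolding twisted_cubic_def
    by (intro CollectI exI[of _ 0] exI[of _ "root 3 6"]) (simp add: axis_def r)
  show "(axis 3 1 :: real^4) \<noteq> 0" by (simp add: axis_eq_0_iff)
qed

lemma VV_w: "Z \<in> VV \<Longrightarrow> zc Z 3 \<noteq> 0"
  using ax3_cubic unfolding VV_def zc_def by blast

lemma cpt: assumes "zc Z 3 \<noteq> 0"
  shows "(-1 / zc Z 3) * blinfun_apply Z (vc t) = Complex (GZ Z t) (HZ Z t)"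
  unfolding lam_apply[OF assms] by (simp add: vc_def GZ_def HZ_def Gc_def Hc_def complex_eq_iff algebra_simps)

lemma VV_GH: assumes "Z \<in> VV" "GZ Z t = 0" "HZ Z t = 0" shows False
proof -
  have w: "zc Z 3 \<noteq> 0" using VV_w assms(1) .
  have "(-1 / zc Z 3) * blinfun_apply Z (vc t) = 0" unfolding cpt[OF w] assms(2,3) by (simp add: complex_eq_iff)
  hence "blinfun_apply Z (vc t) = 0" using w by simp
  thus False using assms(1) vc_cubic unfolding VV_def by blast
qed

lemma OSet_iff: assumes w: "zc Z 3 \<noteq> 0"
  shows "Z \<in> OSet \<longleftrightarrow> (\<exists>u1 u2 u3. u1 < u2 \<and> u2 < u3 \<and> GZ Z u1 = 0 \<and> GZ Z u2 = 0 \<and> GZ Z u3 = 0 \<and>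
     HZ Z u1 > 0 \<and> HZ Z u2 < 0 \<and> HZ Z u3 > 0)"
proof
  assume "Z \<in> OSet"
  hence "Im (nz Z 2) > 0" "Im (nz Z 1)^2 - 2 * Im (nz Z 2) * Im (nz Z 0) > 0"
     "GZ Z (tmf (Im (nz Z 0)) (Im (nz Z 1)) (Im (nz Z 2))) < 0" "GZ Z (tpf (Im (nz Z 0)) (Im (nz Z 1)) (Im (nz Z 2))) > 0"
    by (simp_all add: OSet_def)
  from T1[OF this[unfolded GZ_def]] show "\<exists>u1 u2 u3. u1 < u2 \<and> u2 < u3 \<and> GZ Z u1 = 0 \<and> GZ Z u2 = 0 \<and> GZ Z u3 = 0 \<and>
     HZ Z u1 > 0 \<and> HZ Z u2 < 0 \<and> HZ Z u3 > 0" unfolding GZ_def HZ_def .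
next
  assume "\<exists>u1 u2 u3. u1 < u2 \<and> u2 < u3 \<and> GZ Z u1 = 0 \<and> GZ Z u2 = 0 \<and> GZ Z u3 = 0 \<and>
     HZ Z u1 > 0 \<and> HZ Z u2 < 0 \<and> HZ Z u3 > 0"
  then obtain u1 u2 u3 where u: "u1 < u2" "u2 < u3" "GZ Z u1 = 0" "GZ Z u2 = 0" "GZ Z u3 = 0"
     "HZ Z u1 > 0" "HZ Z u2 < 0" "HZ Z u3 > 0" by blast
  from T2[OF u[unfolded GZ_def HZ_def]] show "Z \<in> OSet" using w unfolding OSet_def GZ_def by simp
qed

lemma Zb_OSet: "Z_basic \<in> OSet"
proof -
  have s: "sqrt (1/3::real) ^ 2 = 1/3" by simp
  have z: "zc Z_basic 0 = Complex 0 (-1/6)" "zc Z_basic 1 = Complex (1/2) 0" "zc Z_basic 2 = Complex 0 1"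
     "zc Z_basic 3 = Complex (-1) 0"
    unfolding zc_def Zb slc_ax s by simp_all
  have w: "zc Z_basic 3 \<noteq> 0" unfolding z by (simp add: complex_eq_iff)
  have n: "nz Z_basic 0 = Complex 0 (-1/6)" "nz Z_basic 1 = Complex (1/2) 0" "nz Z_basic 2 = Complex 0 1"
    unfolding nz_def z by (simp_all add: complex_eq_iff Complex_eq)
  have G: "GZ Z_basic t = t/2 - t^3/6" for t unfolding GZ_def Gc_def n by simp
  have H: "HZ Z_basic t = -1/6 + t^2/2" for t unfolding HZ_def Hc_def n by simp
  have s3: "sqrt 3 ^ 2 = (3::real)" by simp
  have c3: "sqrt 3 ^ 3 = 3 * sqrt (3::real)" by (simp add: power3_eq_cube)
  have g: "GZ Z_basic (- sqrt 3) = 0" "GZ Z_basic 0 = 0" "GZ Z_basic (sqrt 3) = 0"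
    unfolding G by (simp_all add: c3)
  have h: "HZ Z_basic (- sqrt 3) > 0" "HZ Z_basic 0 < 0" "HZ Z_basic (sqrt 3) > 0"
    unfolding H by (simp_all add: s3)
  have o: "- sqrt 3 < (0::real)" "0 < sqrt (3::real)" by simp_all
  show ?thesis unfolding OSet_iff[OF w] using g h o by blast
qed

lemma zc_cont: "continuous_on S (\<lambda>Z. zc Z j)"
  unfolding zc_def by (rule apply_cont)

lemma open_pos: "open U \<Longrightarrow> continuous_on U f \<Longrightarrow> open {x\<in>U. (f x :: real) > 0}"
proof -
  assume "open U" "continuous_on U f"
  from continuous_open_preimage[OF this(2,1) open_greaterThan[of 0]]
  show ?thesis by (simp add: vimage_def Int_def)
qed

lemma OSet_open: "open OSet"
proof -
  define U0 where "U0 = {Z. zc Z 3 \<noteq> 0}"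
  have o0: "open U0" unfolding U0_def
    by (rule open_Collect_neq) (auto intro: zc_cont continuous_on_const)
  have cnz: "continuous_on U0 (\<lambda>Z. nz Z j)" for j
    unfolding nz_def by (intro continuous_on_divide continuous_on_minus zc_cont) (auto simp: U0_def)
  have cR: "continuous_on U0 (\<lambda>Z. Re (nz Z j))" for j by (rule continuous_on_Re[OF cnz])
  have cI: "continuous_on U0 (\<lambda>Z. Im (nz Z j))" for j by (rule continuous_on_Im[OF cnz])
  define U1 where "U1 = {Z\<in>U0. Im (nz Z 2) > 0}"
  have o1: "open U1" unfolding U1_def by (rule open_pos[OF o0 cI])
  define U2 where "U2 = {Z\<in>U1. Im (nz Z 1)^2 - 2 * Im (nz Z 2) * Im (nz Z 0) > 0}"
  have o2: "open U2" unfolding U2_def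
    by (rule open_pos[OF o1]) (intro continuous_intros continuous_on_subset[OF cI]; auto simp: U1_def)
  have cI2: "continuous_on U2 (\<lambda>Z. Im (nz Z j))" for j by (rule continuous_on_subset[OF cI]) (auto simp: U1_def U2_def)
  have cR2: "continuous_on U2 (\<lambda>Z. Re (nz Z j))" for j by (rule continuous_on_subset[OF cR]) (auto simp: U1_def U2_def)
  have cnz2: "continuous_on U2 (\<lambda>Z. nz Z j)" for j by (rule continuous_on_subset[OF cnz]) (auto simp: U1_def U2_def)
  have k2: "Z \<in> U2 \<Longrightarrow> Im (nz Z 2) \<noteq> 0" for Z by (simp add: U1_def U2_def)
  have ctm: "continuous_on U2 (\<lambda>Z. tmf (Im (nz Z 0)) (Im (nz Z 1)) (Im (nz Z 2)))"
    unfolding tmf_def by (intro continuous_on_divide continuous_on_diff continuous_on_minus cI2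
       continuous_on_compose2[OF continuous_on_real_sqrt] continuous_intros) (auto simp: k2)
  have ctp: "continuous_on U2 (\<lambda>Z. tpf (Im (nz Z 0)) (Im (nz Z 1)) (Im (nz Z 2)))"
    unfolding tpf_def by (intro continuous_on_divide continuous_on_add continuous_on_minus cI2
       continuous_on_compose2[OF continuous_on_real_sqrt] continuous_intros) (auto simp: k2)
  define U3 where "U3 = {Z\<in>U2. - GZ Z (tmf (Im (nz Z 0)) (Im (nz Z 1)) (Im (nz Z 2))) > 0}"
  have o3: "open U3" unfolding U3_def GZ_def Gc_def
    by (rule open_pos[OF o2]) (intro continuous_intros cnz2 ctm; auto)
  define U4 where "U4 = {Z\<in>U3. GZ Z (tpf (Im (nz Z 0)) (Im (nz Z 1)) (Im (nz Z 2))) > 0}"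
  have o4: "open U4" unfolding U4_def GZ_def Gc_def
    by (rule open_pos[OF o3]) (intro continuous_intros continuous_on_subset[OF cR2] continuous_on_subset[OF ctp]; auto simp: U3_def)
  have "OSet = U4" unfolding OSet_def U4_def U3_def U2_def U1_def U0_def by auto
  thus ?thesis using o4 by simp
qed




lemma OSet_closed_VV:
  assumes ZV: "Z \<in> VV" and Zc: "Z \<in> closure OSet"
  shows "Z \<in> OSet"
proof -
  obtain X where X: "\<forall>n. X n \<in> OSet" "X \<longlonglongrightarrow> Z" using Zc unfolding closure_sequential by blast
  have w: "zc Z 3 \<noteq> 0" by (rule VV_w[OF ZV])
  have wn: "zc (X n) 3 \<noteq> 0" for n using X(1) by (simp add: OSet_def)
  have tzc: "(\<lambda>n. zc (X n) j) \<longlonglongrightarrow> zc Z j" for j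
    unfolding zc_def by (rule blinfun.tendsto[OF X(2) tendsto_const])
  have tnz: "(\<lambda>n. nz (X n) j) \<longlonglongrightarrow> nz Z j" for j
    unfolding nz_def by (intro tendsto_intros tzc w)
  have tR: "(\<lambda>n. Re (nz (X n) j)) \<longlonglongrightarrow> Re (nz Z j)" for j by (intro tendsto_intros tnz)
  have tI: "(\<lambda>n. Im (nz (X n) j)) \<longlonglongrightarrow> Im (nz Z j)" for j by (intro tendsto_intros tnz)
  define P where "P n u \<longleftrightarrow> fst u < fst (snd u) \<and> fst (snd u) < snd (snd u) \<and>
      GZ (X n) (fst u) = 0 \<and> GZ (X n) (fst (snd u)) = 0 \<and> GZ (X n) (snd (snd u)) = 0 \<and>
      HZ (X n) (fst u) > 0 \<and> HZ (X n) (fst (snd u)) < 0 \<and> HZ (X n) (snd (snd u)) > 0" for n u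
  have "\<forall>n. \<exists>u. P n u"
  proof
    fix n
    from X(1) have "X n \<in> OSet" by blast
    then obtain u1 u2 u3 where "u1 < u2 \<and> u2 < u3 \<and> GZ (X n) u1 = 0 \<and> GZ (X n) u2 = 0 \<and> GZ (X n) u3 = 0 \<and>
     HZ (X n) u1 > 0 \<and> HZ (X n) u2 < 0 \<and> HZ (X n) u3 > 0" unfolding OSet_iff[OF wn] by blast
    hence "P n (u1, u2, u3)" unfolding P_def by simp
    thus "\<exists>u. P n u" by blast
  qed
  then obtain U where U: "\<forall>n. P n (U n)" by (metis choice)
  define Kf where "Kf n = 1 + 6 * (\<bar>Re (nz (X n) 0)\<bar> + \<bar>Re (nz (X n) 1)\<bar> + \<bar>Re (nz (X n) 2)\<bar>)" for n
  have "Kf \<longlonglongrightarrow> 1 + 6 * (\<bar>Re (nz Z 0)\<bar> + \<bar>Re (nz Z 1)\<bar> + \<bar>Re (nz Z 2)\<bar>)"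
    unfolding Kf_def by (intro tendsto_intros tR)
  hence "convergent Kf" unfolding convergent_def by blast
  hence "Bseq Kf" by (rule convergent_imp_Bseq)
  then obtain K where K: "K > 0" "\<forall>n. norm (Kf n) \<le> K" by (rule BseqE)
  have KK: "Kf n \<le> K" for n using K(2)[rule_format, of n] by simp
  have rb: "GZ (X n) t = 0 \<Longrightarrow> \<bar>t\<bar> \<le> K" for n t
    using Gc_root_bound[of "Re (nz (X n) 0)" "Re (nz (X n) 1)" "Re (nz (X n) 2)" t] KK[of n]
    unfolding GZ_def Kf_def by simp
  define S where "S = {-K..K} \<times> {-K..K} \<times> {-K..K}"
  have cS: "compact S" unfolding S_def by (intro compact_Times compact_Icc)
  have US: "\<forall>n. U n \<in> S"
  proof
    fix n
    have "P n (U n)" using U by blast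
    hence "\<bar>fst (U n)\<bar> \<le> K" "\<bar>fst (snd (U n))\<bar> \<le> K" "\<bar>snd (snd (U n))\<bar> \<le> K"
      unfolding P_def using rb by blast+
    thus "U n \<in> S" unfolding S_def by (cases "U n") (auto simp: abs_le_iff)
  qed
  obtain l r where lr: "l \<in> S" "strict_mono (r :: nat \<Rightarrow> nat)" "(U \<circ> r) \<longlonglongrightarrow> l"
    using seq_compactE[OF compact_imp_seq_compact[OF cS] US] by blast
  have Ur: "(\<lambda>n. U (r n)) \<longlonglongrightarrow> l" using lr(3) by (simp add: o_def)
  have t1: "(\<lambda>n. fst (U (r n))) \<longlonglongrightarrow> fst l" by (rule tendsto_fst[OF Ur])
  have t2: "(\<lambda>n. fst (snd (U (r n)))) \<longlonglongrightarrow> fst (snd l)" by (rule tendsto_fst[OF tendsto_snd[OF Ur]])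
  have t3: "(\<lambda>n. snd (snd (U (r n)))) \<longlonglongrightarrow> snd (snd l)" by (rule tendsto_snd[OF tendsto_snd[OF Ur]])
  have tRr: "(\<lambda>n. Re (nz (X (r n)) j)) \<longlonglongrightarrow> Re (nz Z j)" for j
    using LIMSEQ_subseq_LIMSEQ[OF tR lr(2)] by (simp add: o_def)
  have tIr: "(\<lambda>n. Im (nz (X (r n)) j)) \<longlonglongrightarrow> Im (nz Z j)" for j
    using LIMSEQ_subseq_LIMSEQ[OF tI lr(2)] by (simp add: o_def)
  have tnzr: "(\<lambda>n. nz (X (r n)) j) \<longlonglongrightarrow> nz Z j" for j
    using LIMSEQ_subseq_LIMSEQ[OF tnz lr(2)] by (simp add: o_def)
  have limG: "(\<lambda>n. GZ (X (r n)) (f n)) \<longlonglongrightarrow> GZ Z t" if "f \<longlonglongrightarrow> t" for f t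
    unfolding GZ_def Gc_def by (intro tendsto_intros tnzr that; simp)
  have limH: "(\<lambda>n. HZ (X (r n)) (f n)) \<longlonglongrightarrow> HZ Z t" if "f \<longlonglongrightarrow> t" for f t
    unfolding HZ_def Hc_def by (intro tendsto_intros tnzr that; simp)
  have Pr: "P (r n) (U (r n))" for n using U by blast
  have G0: "GZ Z t = 0" if "f \<longlonglongrightarrow> t" "\<And>n. GZ (X (r n)) (f n) = 0" for f t
  proof -
    have "(\<lambda>n. GZ (X (r n)) (f n)) = (\<lambda>n. 0)" using that(2) by simp
    hence "(\<lambda>n. 0::real) \<longlonglongrightarrow> GZ Z t" using limG[OF that(1)] by simp
    thus ?thesis using LIMSEQ_unique[OF _ tendsto_const] by metis
  qed
  have Hge: "HZ Z t \<ge> 0" if "f \<longlonglongrightarrow> t" "\<And>n. HZ (X (r n)) (f n) > 0" for f t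
    by (rule LIMSEQ_le_const[OF limH[OF that(1)]]) (use that(2) less_imp_le in blast)
  have Hle: "HZ Z t \<le> 0" if "f \<longlonglongrightarrow> t" "\<And>n. HZ (X (r n)) (f n) < 0" for f t
    by (rule LIMSEQ_le_const2[OF limH[OF that(1)]]) (use that(2) less_imp_le in blast)
  have g1: "GZ Z (fst l) = 0" by (rule G0[OF t1]) (use Pr in \<open>simp add: P_def\<close>)
  have g2: "GZ Z (fst (snd l)) = 0" by (rule G0[OF t2]) (use Pr in \<open>simp add: P_def\<close>)
  have g3: "GZ Z (snd (snd l)) = 0" by (rule G0[OF t3]) (use Pr in \<open>simp add: P_def\<close>)
  have h1: "HZ Z (fst l) \<ge> 0" by (rule Hge[OF t1]) (use Pr in \<open>simp add: P_def\<close>)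
  have h2: "HZ Z (fst (snd l)) \<le> 0" by (rule Hle[OF t2]) (use Pr in \<open>simp add: P_def\<close>)
  have h3: "HZ Z (snd (snd l)) \<ge> 0" by (rule Hge[OF t3]) (use Pr in \<open>simp add: P_def\<close>)
  have h1': "HZ Z (fst l) > 0" using h1 VV_GH[OF ZV g1] by fastforce
  have h2': "HZ Z (fst (snd l)) < 0" using h2 VV_GH[OF ZV g2] by fastforce
  have h3': "HZ Z (snd (snd l)) > 0" using h3 VV_GH[OF ZV g3] by fastforce
  have o12: "fst l \<le> fst (snd l)"
    by (rule LIMSEQ_le[OF t1 t2]) (use Pr in \<open>auto simp: P_def less_imp_le\<close>)
  have o23: "fst (snd l) \<le> snd (snd l)"
    by (rule LIMSEQ_le[OF t2 t3]) (use Pr in \<open>auto simp: P_def less_imp_le\<close>)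
  have "fst l \<noteq> fst (snd l)" using h1' h2' by auto
  hence s12: "fst l < fst (snd l)" using o12 by simp
  have "fst (snd l) \<noteq> snd (snd l)" using h3' h2' by auto
  hence s23: "fst (snd l) < snd (snd l)" using o23 by simp
  show ?thesis unfolding OSet_iff[OF w] using s12 s23 g1 g2 g3 h1' h2' h3' by blast
qed

lemma PP_OSet: "PP \<subseteq> OSet"
proof -
  have ZbV: "Z_basic \<in> VV" using Zb_SS SS_VV by blast
  have conn: "connected PP" unfolding PP_def by simp
  have PV: "PP \<subseteq> VV" unfolding PP_def by (rule connected_component_subset)
  have eq: "PP \<inter> OSet = PP \<inter> closure OSet" using PV OSet_closed_VV closure_subset by blast
  have op: "openin (top_of_set PP) (PP \<inter> OSet)" by (rule openin_open_Int[OF OSet_open])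
  have cl: "closedin (top_of_set PP) (PP \<inter> OSet)" unfolding eq by (rule closedin_closed_Int[OF closed_closure])
  have ne: "Z_basic \<in> PP \<inter> OSet" using ZbV Zb_OSet unfolding PP_def by simp
  from conn[unfolded connected_clopen] op cl have "PP \<inter> OSet = {} \<or> PP \<inter> OSet = PP" by blast
  with ne show ?thesis by blast
qed

theorem lemma8p3:
  shows "SS \<subseteq> PP \<and> (\<forall>Z\<in>PP. \<exists>!W. W \<in> SS \<and> in_GL2_orbit W Z) \<and> simply_connected SS"
proof (intro conjI ballI)
  show "SS \<subseteq> PP" unfolding PP_def
    by (rule connected_component_maximal[OF Zb_SS simply_connected_imp_connected[OF SS_simply_connected] SS_VV])
  show "simply_connected SS" by (rule SS_simply_connected)
  fix Z assume "Z \<in> PP"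
  hence "Z \<in> OSet" using PP_OSet by blast
  then obtain W where W: "W \<in> SS" "in_GL2_orbit W Z" using existence by blast
  show "\<exists>!W. W \<in> SS \<and> in_GL2_orbit W Z"
  proof (rule ex1I[of _ W])
    show "W \<in> SS \<and> in_GL2_orbit W Z" using W by blast
    show "W' = W" if "W' \<in> SS \<and> in_GL2_orbit W' Z" for W'
      using orbit_unique[OF _ W(1) _ W(2)] that by blast
  qed
qed


end
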